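(* Let $v$ satisfy the standing assumptions and the doubling condition. Let $u(z)=\operatorname{Re}\sum_k a_{n_k}z^{n_k}$ be a Hadamard gap series converging in $\mathbb{D}$, i.e. $n_k$ positive integers with $n_{k+1}\ge\lambda n_k$ for some $\lambda>1$. Then $u\in k^\infty_v$ if and only if $u\in h^\infty_v$.
   Context: Standing assumptions: $v:[0,1)\to[1,\infty)$ is positive, increasing, continuous, $v(0)=1$, $\lim_{r\to1}v(r)=+\infty$. Doubling condition: there is $D\ge1$ with $v(1-d)\le D\,v(1-2d)$ for all $d\in(0,1/2]$. $k^\infty_v$ is the set of real harmonic $u$ on $\mathbb{D}$ with $u(z)\le Kv(|z|)$ for some $K>0$; $h^\infty_v$ is the set of real harmonic $u$ on $\mathbb{D}$ with $|u(z)|\le Kv(|z|)$ for some $K>0$. *)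

theory Defs
  imports "HOL-Analysis.Analysis"
begin

definition harmonic_on :: "complex set \<Rightarrow> (complex \<Rightarrow> real) \<Rightarrow> bool" where
  "harmonic_on S u \<longleftrightarrow> open S \<and>
     (\<exists>ux uy uxx uxy uyx uyy.
        (\<forall>z\<in>S. (u has_derivative (\<lambda>h. Re h * ux z + Im h * uy z)) (at z)) \<and>
        (\<forall>z\<in>S. (ux has_derivative (\<lambda>h. Re h * uxx z + Im h * uxy z)) (at z)) \<and>
        (\<forall>z\<in>S. (uy has_derivative (\<lambda>h. Re h * uyx z + Im h * uyy z)) (at z)) \<and>
        continuous_on S uxx \<and> continuous_on S uxy \<and>
        continuous_on S uyx \<and> continuous_on S uyy \<and>
        (\<forall>z\<in>S. uxx z + uyy z = 0))"

definition k_inf :: "(real \<Rightarrow> real) \<Rightarrow> (complex \<Rightarrow> real) set" where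
  "k_inf v = {u. harmonic_on (ball 0 1) u \<and>
                 (\<exists>K>0. \<forall>z\<in>ball 0 1. u z \<le> K * v (norm z))}"

definition h_inf :: "(real \<Rightarrow> real) \<Rightarrow> (complex \<Rightarrow> real) set" where
  "h_inf v = {u. harmonic_on (ball 0 1) u \<and>
                 (\<exists>K>0. \<forall>z\<in>ball 0 1. \<bar>u z\<bar> \<le> K * v (norm z))}"

definition weight :: "(real \<Rightarrow> real) \<Rightarrow> bool" where
  "weight v \<longleftrightarrow> (\<forall>r\<in>{0..<1}. v r > 0) \<and> mono_on {0..<1} v \<and>
     continuous_on {0..<1} v \<and> v 0 = 1 \<and> filterlim v at_top (at_left 1)"

definition doubling :: "(real \<Rightarrow> real) \<Rightarrow> bool" where
  "doubling v \<longleftrightarrow> (\<exists>D\<ge>1. \<forall>d\<in>{0<..1/2}. v (1 - d) \<le> D * v (1 - 2 * d))"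

end

theory Submission
  imports Defs
begin

fun Cc :: "(nat \<Rightarrow> complex) \<Rightarrow> (nat \<Rightarrow> int) \<Rightarrow> nat \<Rightarrow> int \<Rightarrow> complex" where
  "Cc c s 0 g = (if g = 0 then 1 else 0)"
| "Cc c s (Suc t) g = Cc c s t g + c t / 2 * Cc c s t (g + s t) + cnj (c t) / 2 * Cc c s t (g - s t)"

lemma Cc_supp:
  assumes "\<forall>i. s i \<ge> 0" and "\<bar>g\<bar> > (\<Sum>i<t. s i)"
  shows "Cc c s t g = 0"
  using assms(2)
proof (induction t arbitrary: g)
  case 0 then show ?case by simp
next
  case (Suc t)
  have st: "s t \<ge> 0" using assms(1) by auto
  have "\<bar>g\<bar> > (\<Sum>i<t. s i)" "\<bar>g + s t\<bar> > (\<Sum>i<t. s i)" "\<bar>g - s t\<bar> > (\<Sum>i<t. s i)"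
    using Suc.prems st by auto
  then have "Cc c s t g = 0" "Cc c s t (g + s t) = 0" "Cc c s t (g - s t) = 0"
    using Suc.IH by blast+
  then show ?case by (simp only: Cc.simps) simp
qed

lemma Cc_zero:
  assumes "\<forall>i. s i \<ge> 0" and "\<forall>t. (\<Sum>i<t. s i) < s t"
  shows "Cc c s t 0 = 1"
proof (induction t)
  case 0 then show ?case by simp
next
  case (Suc t)
  have "Cc c s t (s t) = 0" "Cc c s t (- s t) = 0"
    using assms by (auto intro!: Cc_supp)
  then show ?case using Suc.IH by simp
qed

lemma Cc_in:
  assumes s0: "\<forall>i. s i \<ge> 0" and F: "\<forall>t. (\<Sum>i<t. s i) < s t"
    and sn: "\<forall>i. s i = nn (idx i)" and pos: "\<forall>m. nn m > 0"
    and sep: "\<forall>m t. m \<noteq> idx t \<longrightarrow> (\<Sum>i<t. s i) < \<bar>nn m - s t\<bar>"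
    and inj: "inj idx"
  shows "i < t \<Longrightarrow> Cc c s t (nn (idx i)) = cnj (c i) / 2"
proof (induction t)
  case 0 then show ?case by simp
next
  case (Suc t)
  have Ft: "(\<Sum>i<t. s i) < s t" using F[rule_format, of t] .
  have st: "0 \<le> s t" using s0[rule_format, of t] .
  show ?case
  proof (cases "i = t")
    case True
    have e: "nn (idx i) = s t" using sn True by simp
    have "Cc c s t (s t) = 0"
      by (rule Cc_supp[OF s0]) (use Ft st in simp)
    moreover have "Cc c s t (s t + s t) = 0"
      by (rule Cc_supp[OF s0]) (use Ft st in simp)
    moreover have "Cc c s t 0 = 1" using Cc_zero[OF s0 F] .
    ultimately show ?thesis unfolding e Cc.simps(2) using True by simp
  next
    case False
    then have it: "i < t" using Suc.prems by simp
    have ne: "idx i \<noteq> idx t" using False by (simp add: inj_eq[OF inj])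
    have "(\<Sum>i<t. s i) < \<bar>nn (idx i) - s t\<bar>" using sep[rule_format, OF ne] .
    then have a: "Cc c s t (nn (idx i) - s t) = 0"
      by (rule Cc_supp[OF s0])
    have p: "nn (idx i) > 0" using pos[rule_format] .
    have b: "Cc c s t (nn (idx i) + s t) = 0"
      by (rule Cc_supp[OF s0]) (use Ft p in simp)
    show ?thesis unfolding Cc.simps(2) Suc.IH[OF it] a b by simp
  qed
qed

lemma Cc_out:
  assumes s0: "\<forall>i. s i \<ge> 0" and F: "\<forall>t. (\<Sum>i<t. s i) < s t"
    and pos: "\<forall>m. nn m > 0"
    and sep: "\<forall>m t. m \<noteq> idx t \<longrightarrow> (\<Sum>i<t. s i) < \<bar>nn m - s t\<bar>"
  shows "(\<forall>i<t. idx i \<noteq> m) \<Longrightarrow> Cc c s t (nn m) = 0"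
proof (induction t)
  case 0 have "nn m \<noteq> 0" using pos[rule_format, of m] by simp
  then show ?case by simp
next
  case (Suc t)
  have Ft: "(\<Sum>i<t. s i) < s t" using F[rule_format, of t] .
  have ne: "m \<noteq> idx t" using Suc.prems[rule_format, of t] by auto
  have "(\<Sum>i<t. s i) < \<bar>nn m - s t\<bar>" using sep[rule_format, OF ne] .
  then have a: "Cc c s t (nn m - s t) = 0"
    by (rule Cc_supp[OF s0])
  have p: "nn m > 0" using pos[rule_format] .
  have b: "Cc c s t (nn m + s t) = 0"
    by (rule Cc_supp[OF s0]) (use Ft p in simp)
  have "\<forall>i<t. idx i \<noteq> m" proof (intro allI impI)
    fix i assume "i < t" then show "idx i \<noteq> m" using Suc.prems[rule_format, of i] by simp
  qed
  then have "Cc c s t (nn m) = 0" by (rule Suc.IH)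
  then show ?case unfolding Cc.simps(2) a b by simp
qed



definition Pp :: "(nat \<Rightarrow> complex) \<Rightarrow> (nat \<Rightarrow> int) \<Rightarrow> nat \<Rightarrow> real \<Rightarrow> real" where
  "Pp c s t x = (\<Prod>l<t. 1 + Re (c l * cis (of_int (s l) * x)))"

lemma re_complex: "complex_of_real (Re w) = (w + cnj w) / 2"
  by (simp add: complex_add_cnj)

lemma Pp_step:
  "complex_of_real (Pp c s (Suc t) x) * cis (of_int g * x) =
     complex_of_real (Pp c s t x) * cis (of_int g * x)
     + c t / 2 * (complex_of_real (Pp c s t x) * cis (of_int (g + s t) * x))
     + cnj (c t) / 2 * (complex_of_real (Pp c s t x) * cis (of_int (g - s t) * x))"
proof -
  define A where "A = cis (of_int g * x)"
  define B where "B = cis (of_int (s t) * x)"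
  have e1: "cis (of_int (g + s t) * x) = A * B"
    unfolding A_def B_def by (simp add: cis_mult distrib_right)
  have e2: "cis (of_int (g - s t) * x) = A * cnj B"
    unfolding A_def B_def by (simp add: cis_mult cis_cnj left_diff_distrib)
  have e3: "complex_of_real (Pp c s (Suc t) x) = complex_of_real (Pp c s t x) * (1 + (c t * B + cnj (c t) * cnj B) / 2)"
    unfolding Pp_def B_def prod.lessThan_Suc of_real_mult of_real_add of_real_1 re_complex complex_cnj_mult
    by (simp only:)
  show ?thesis unfolding e1 e2 e3 A_def[symmetric] by (simp add: field_simps)
qed

lemma roots_sum:
  fixes N :: nat and g :: int
  assumes N: "N > 0" and g: "\<bar>g\<bar> < int N"
  shows "(\<Sum>i<N. cis (of_int g * (2 * pi * real i / real N))) = (if g = 0 then of_nat N else 0)"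
proof (cases "g = 0")
  case True then show ?thesis by simp
next
  case False
  define w where "w = cis (2 * pi * of_int g / real N)"
  have pw: "cis (of_int g * (2 * pi * real i / real N)) = w ^ i" for i
  proof -
    have "of_int g * (2 * pi * real i / real N) = real i * (2 * pi * of_int g / real N)" by simp
    then show ?thesis unfolding w_def Complex.DeMoivre by (simp only:)
  qed
  have wN: "w ^ N = 1"
  proof -
    have "w ^ N = cis (2 * pi * of_int g)" unfolding w_def Complex.DeMoivre using N by (simp add: field_simps)
    also have "\<dots> = 1" by (rule cis_multiple_2pi) simp
    finally show ?thesis .
  qed
  have w1: "w \<noteq> 1"
  proof
    assume "w = 1"
    then have "exp (\<i> * complex_of_real (2 * pi * of_int g / real N)) = 1"
      unfolding w_def cis_conv_exp .
    then obtain k :: int where k: "2 * pi * of_int g / real N = of_int (2 * k) * pi"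
      unfolding exp_eq_1 by auto
    then have "of_int g = real N * of_int k" using N by (simp add: field_simps)
    then have gk: "g = int N * k" by (metis of_int_eq_iff of_int_mult of_int_of_nat_eq)
    show False
    proof (cases "k = 0")
      case True then show False using gk False by simp
    next
      case False
      then have "\<bar>int N * k\<bar> \<ge> int N" using N by (simp add: abs_mult mult_le_cancel_left1)
      then show False using g gk by simp
    qed
  qed
  show ?thesis unfolding pw sum_gp_strict using w1 wN False by simp
qed

lemma avg_Cc:
  fixes N :: nat
  assumes N: "N > 0" and s0: "\<forall>i. s i \<ge> 0"
  shows "\<bar>g\<bar> + (\<Sum>l<t. s l) < int N \<Longrightarrow>
    (\<Sum>i<N. complex_of_real (Pp c s t (2 * pi * real i / real N)) * cis (of_int g * (2 * pi * real i / real N)))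
      = of_nat N * Cc c s t g"
proof (induction t arbitrary: g)
  case 0
  have "\<bar>g\<bar> < int N" using 0 by simp
  then show ?case using roots_sum[OF N] by (simp add: Pp_def)
next
  case (Suc t)
  have st: "s t \<ge> 0" using s0[rule_format, of t] .
  have h1: "\<bar>g\<bar> + (\<Sum>l<t. s l) < int N" using Suc.prems st by simp
  have h2: "\<bar>g + s t\<bar> + (\<Sum>l<t. s l) < int N" using Suc.prems st by simp
  have h3: "\<bar>g - s t\<bar> + (\<Sum>l<t. s l) < int N" using Suc.prems st by simp
  show ?case
    unfolding Pp_step sum.distrib sum_distrib_left[symmetric]
    unfolding Suc.IH[OF h1] Suc.IH[OF h2] Suc.IH[OF h3] Cc.simps(2)
    by (simp add: algebra_simps)
qed



lemma gap_pow:
  fixes n :: "nat \<Rightarrow> nat" and lam :: real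
  assumes lam: "lam > 1" and gap: "\<forall>k. real (n (Suc k)) \<ge> lam * real (n k)"
  shows "real (n (k + d)) \<ge> lam ^ d * real (n k)"
proof (induction d)
  case 0 then show ?case by simp
next
  case (Suc d)
  have "lam ^ Suc d * real (n k) = lam * (lam ^ d * real (n k))" by simp
  also have "\<dots> \<le> lam * real (n (k + d))" using Suc lam by (intro mult_left_mono) auto
  also have "\<dots> \<le> real (n (k + Suc d))" using gap[rule_format, of "k + d"] by simp
  finally show ?case .
qed

lemma gap_sep:
  fixes n :: "nat \<Rightarrow> nat" and lam :: real
  assumes lam: "lam > 1" and gap: "\<forall>k. real (n (Suc k)) \<ge> lam * real (n k)"
    and pos: "\<forall>k. n k > 0" and mk: "m \<noteq> k"
  shows "real (n k) * (1 - 1 / lam) \<le> \<bar>real (n m) - real (n k)\<bar>"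
proof (cases "m > k")
  case True
  define d where "d = m - k"
  have d: "m = k + d" "d \<ge> 1" using True unfolding d_def by auto
  have "lam ^ 1 \<le> lam ^ d" using lam d by (intro power_increasing) auto
  then have "lam * real (n k) \<le> lam ^ d * real (n k)" by (intro mult_right_mono) auto
  also have "\<dots> \<le> real (n m)" using gap_pow[OF lam gap, where k=k and d=d] d by simp
  finally have a: "lam * real (n k) \<le> real (n m)" .
  have "real (n k) * (1 - 1 / lam) \<le> real (n k) * (lam - 1)"
  proof (rule mult_left_mono)
    have "0 \<le> (lam - 1)^2" by simp
    then show "1 - 1 / lam \<le> lam - 1" using lam by (simp add: field_simps power2_eq_square)
  qed simp
  then show ?thesis using a by (simp add: algebra_simps)
next
  case False
  then have "k > m" using mk by simp
  define d where "d = k - m"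
  have d: "k = m + d" "d \<ge> 1" using \<open>k > m\<close> unfolding d_def by auto
  have "lam ^ 1 \<le> lam ^ d" using lam d by (intro power_increasing) auto
  then have "lam * real (n m) \<le> lam ^ d * real (n m)" by (intro mult_right_mono) auto
  also have "\<dots> \<le> real (n k)" using gap_pow[OF lam gap, where k=m and d=d] d by simp
  finally have a: "lam * real (n m) \<le> real (n k)" .
  then have "real (n m) \<le> real (n k) / lam" using lam by (simp add: field_simps)
  then have "real (n k) * (1 - 1 / lam) \<le> real (n k) - real (n m)" by (simp add: algebra_simps)
  also have "\<dots> \<le> \<bar>real (n m) - real (n k)\<bar>" by simp
  finally show ?thesis .
qed

lemma gap_F:
  fixes n :: "nat \<Rightarrow> nat" and lam Q :: real
  assumes lam: "lam > 1" and gap: "\<forall>k. real (n (Suc k)) \<ge> lam * real (n k)"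
    and Q: "Q > 2" and q: "lam ^ q \<ge> Q"
  shows "(\<Sum>l<t. real (n (j + q * l))) \<le> real (n (j + q * t)) / (Q - 1)"
proof (induction t)
  case 0 then show ?case using Q by simp
next
  case (Suc t)
  have "real (n (j + q * Suc t)) \<ge> lam ^ q * real (n (j + q * t))"
    using gap_pow[OF lam gap, where k="j + q * t" and d=q] by (simp add: algebra_simps)
  moreover have "lam ^ q * real (n (j + q * t)) \<ge> Q * real (n (j + q * t))"
    using q by (intro mult_right_mono) auto
  ultimately have b: "real (n (j + q * Suc t)) \<ge> Q * real (n (j + q * t))" by linarith
  have "(\<Sum>l<Suc t. real (n (j + q * l))) \<le> real (n (j + q * t)) / (Q - 1) + real (n (j + q * t))"
    using Suc by simp
  also have "\<dots> = Q * real (n (j + q * t)) / (Q - 1)" using Q by (simp add: field_simps)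
  also have "\<dots> \<le> real (n (j + q * Suc t)) / (Q - 1)" using b Q by (intro divide_right_mono) auto
  finally show ?case .
qed


lemma mult_cnj_sgn: "(z::complex) * cnj (sgn z) = complex_of_real (norm z)"
proof (cases "z = 0")
  case True then show ?thesis by simp
next
  case False
  have "z * cnj (sgn z) = z * cnj z / complex_of_real (norm z)"
    by (simp add: sgn_div_norm divide_inverse scaleR_conv_of_real mult.commute)
  also have "\<dots> = complex_of_real (norm z ^ 2) / complex_of_real (norm z)"
    by (simp only: complex_norm_square)
  also have "\<dots> = complex_of_real (norm z)" using False by (simp add: power2_eq_square)
  finally show ?thesis .
qed

lemma Pp_nonneg:
  assumes "\<forall>l. norm (c l) \<le> 1"
  shows "Pp c s t x \<ge> 0"
  unfolding Pp_def
proof (rule prod_nonneg)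
  fix l assume "l \<in> {..<t}"
  have "\<bar>Re (c l * cis (of_int (s l) * x))\<bar> \<le> norm (c l * cis (of_int (s l) * x))"
    by (rule abs_Re_le_cmod)
  also have "\<dots> \<le> 1" using assms[rule_format, of l] by (simp add: norm_mult)
  finally show "0 \<le> 1 + Re (c l * cis (of_int (s l) * x))" by linarith
qed


lemma block_bound:
  fixes n :: "nat \<Rightarrow> nat" and lam Q r B :: real and a :: "nat \<Rightarrow> complex" and q j t :: nat
  assumes lam: "lam > 1" and gap: "\<forall>k. real (n (Suc k)) \<ge> lam * real (n k)"
    and pos: "\<forall>k. n k > 0"
    and Qd: "Q = 2 + lam / (lam - 1)" and qQ: "lam ^ q \<ge> Q" and q0: "q > 0"
    and r: "0 \<le> r" and summ: "summable (\<lambda>m. norm (a m) * r ^ n m)"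
    and ub: "\<forall>x. Re (\<Sum>m. a m * (complex_of_real r * cis x) ^ n m) \<le> B"
  shows "(\<Sum>i<t. norm (a (j + q * i)) * r ^ n (j + q * i)) \<le> 2 * B"
proof -
  define idx where "idx = (\<lambda>i::nat. j + q * i)"
  define s where "s = (\<lambda>i. int (n (idx i)))"
  define nn where "nn = (\<lambda>m. int (n m))"
  define c where "c = (\<lambda>i. sgn (a (idx i)))"
  define w where "w = (\<lambda>m. norm (a m) * r ^ n m)"
  define b where "b = (\<lambda>m. a m * complex_of_real (r ^ n m))"
  have Q2: "Q > 2" using lam Qd by simp
  have s0: "\<forall>i. s i \<ge> 0" unfolding s_def by simp
  have Fr: "real_of_int (\<Sum>l<t'. s l) \<le> real (n (idx t')) / (Q - 1)" for t'
  proof -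
    have "real_of_int (\<Sum>l<t'. s l) = (\<Sum>l<t'. real (n (j + q * l)))"
      unfolding s_def idx_def by simp
    also have "\<dots> \<le> real (n (j + q * t')) / (Q - 1)" by (rule gap_F[OF lam gap Q2 qQ])
    finally show ?thesis unfolding idx_def .
  qed
  have lt1: "real (n k) / (Q - 1) < real (n k)" for k
  proof -
    have "real (n k) > 0" using pos[rule_format, of k] by simp
    then show ?thesis using Q2 by (simp add: field_simps)
  qed
  have F: "\<forall>t'. (\<Sum>l<t'. s l) < s t'"
  proof
    fix t'
    have "real_of_int (\<Sum>l<t'. s l) < real_of_int (s t')"
      using Fr[of t'] lt1[of "idx t'"] unfolding s_def by simp
    then show "(\<Sum>l<t'. s l) < s t'" by linarith
  qed
  have lt2: "real (n k) / (Q - 1) < real (n k) * (1 - 1 / lam)" for k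
  proof -
    have nk: "real (n k) > 0" using pos[rule_format, of k] by simp
    have "1 / (Q - 1) < 1 - 1 / lam"
    proof -
      have "Q - 1 = (2 * lam - 1) / (lam - 1)" using Qd lam by (simp add: field_simps)
      then have "1 / (Q - 1) = (lam - 1) / (2 * lam - 1)" by simp
      also have "\<dots> < (lam - 1) / lam" using lam by (intro divide_strict_left_mono) auto
      also have "\<dots> = 1 - 1 / lam" using lam by (simp add: field_simps)
      finally show ?thesis .
    qed
    then have "real (n k) * (1 / (Q - 1)) < real (n k) * (1 - 1 / lam)"
      using nk by (intro mult_strict_left_mono) auto
    then show ?thesis by simp
  qed
  have sep: "\<forall>m t'. m \<noteq> idx t' \<longrightarrow> (\<Sum>l<t'. s l) < \<bar>nn m - s t'\<bar>"
  proof (intro allI impI)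
    fix m t' assume mt: "m \<noteq> idx t'"
    have "real_of_int (\<Sum>l<t'. s l) < \<bar>real (n m) - real (n (idx t'))\<bar>"
      using Fr[of t'] lt2[of "idx t'"] gap_sep[OF lam gap pos mt] by linarith
    then have "real_of_int (\<Sum>l<t'. s l) < real_of_int \<bar>nn m - s t'\<bar>"
      unfolding nn_def s_def by simp
    then show "(\<Sum>l<t'. s l) < \<bar>nn m - s t'\<bar>" by linarith
  qed
  have sn: "\<forall>i. s i = nn (idx i)" unfolding s_def nn_def by simp
  have posn: "\<forall>m. nn m > 0" unfolding nn_def using pos by simp
  have inj: "inj idx" unfolding idx_def using q0 by (auto intro!: injI)
  have cn: "\<forall>l. norm (c l) \<le> 1" unfolding c_def by (simp add: norm_sgn)
  have summw: "summable w" unfolding w_def using summ .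
  have wnn: "w m \<ge> 0" for m unfolding w_def using r by simp
  define X where "X = (\<Sum>i<t. w (idx i))"
  have main: "X / 2 \<le> B + e" if e: "e > 0" for e
  proof -
    obtain L0 where L0: "\<forall>L\<ge>L0. norm (\<Sum>m. w (m + L)) < e"
      using suminf_exist_split[OF e summw] by blast
    define L where "L = max L0 (j + q * t)"
    define T where "T = (\<Sum>m. w (m + L))"
    have summT: "summable (\<lambda>m. w (m + L))" using summw by simp
    have T0: "T \<ge> 0" unfolding T_def using summT wnn by (intro suminf_nonneg) auto
    have Te: "T < e" using L0[rule_format, of L] T0 unfolding L_def T_def by simp
    define F0 where "F0 = (\<Sum>l<t. s l)"
    define N where "N = nat F0 + (\<Sum>m<L. n m) + 1"
    have N0: "N > 0" unfolding N_def by simp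
    define \<theta> where "\<theta> = (\<lambda>i::nat. 2 * pi * real i / real N)"
    define P where "P = (\<lambda>i. Pp c s t (\<theta> i))"
    have Pnn: "P i \<ge> 0" for i unfolding P_def by (rule Pp_nonneg[OF cn])
    have F0nn: "F0 \<ge> 0" unfolding F0_def using s0 by (simp add: sum_nonneg)
    have avg: "(\<Sum>i<N. complex_of_real (P i) * cis (of_int g * \<theta> i)) = of_nat N * Cc c s t g"
      if "\<bar>g\<bar> + F0 < int N" for g
      unfolding P_def \<theta>_def F0_def using avg_Cc[OF N0 s0] that unfolding F0_def by blast
    have "(\<Sum>i<N. complex_of_real (P i) * cis (of_int 0 * \<theta> i)) = of_nat N * Cc c s t 0"
      by (rule avg) (use F0nn N0 in \<open>simp add: N_def add_pos_nonneg sum_nonneg\<close>)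
    then have "complex_of_real (\<Sum>i<N. P i) = of_nat N"
      using Cc_zero[OF s0 F] by simp
    then have sumP: "(\<Sum>i<N. P i) = real N"
      by (metis of_real_eq_iff of_real_of_nat_eq)
    have head: "Re (\<Sum>m<L. b m * cis (of_int (nn m) * x)) \<le> B + T" for x
    proof -
      define f where "f = (\<lambda>m. a m * (complex_of_real r * cis x) ^ n m)"
      have fb: "f m = b m * cis (of_int (nn m) * x)" for m
        unfolding f_def b_def nn_def by (simp add: power_mult_distrib Complex.DeMoivre)
      have nf: "norm (f m) = w m" for m
        unfolding f_def w_def using r by (simp add: norm_mult norm_power)
      have sf: "summable f" by (rule summable_norm_cancel) (use summw nf in simp)
      have split: "(\<Sum>m. f m) = (\<Sum>m. f (m + L)) + (\<Sum>m<L. f m)"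
        by (rule suminf_split_initial_segment[OF sf])
      have "norm (\<Sum>m. f (m + L)) \<le> T"
        unfolding T_def by (rule norm_suminf_le) (use nf summT in auto)
      then have "- Re (\<Sum>m. f (m + L)) \<le> T" using abs_Re_le_cmod[of "\<Sum>m. f (m + L)"] by linarith
      moreover have "Re (\<Sum>m. f m) \<le> B" using ub[rule_format, of x] unfolding f_def .
      ultimately have "Re (\<Sum>m<L. f m) \<le> B + T" unfolding split by simp
      then show ?thesis unfolding fb .
    qed
    have sumle: "(\<Sum>i<N. P i * Re (\<Sum>m<L. b m * cis (of_int (nn m) * \<theta> i))) \<le> (\<Sum>i<N. P i * (B + T))"
      by (rule sum_mono) (use Pnn head in \<open>auto intro: mult_left_mono\<close>)
    have rhs: "(\<Sum>i<N. P i * (B + T)) = real N * (B + T)"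
      using sumP by (simp add: sum_distrib_right[symmetric])
    have lhs1: "(\<Sum>i<N. P i * Re (\<Sum>m<L. b m * cis (of_int (nn m) * \<theta> i)))
        = Re (\<Sum>m<L. b m * (\<Sum>i<N. complex_of_real (P i) * cis (of_int (nn m) * \<theta> i)))"
      by (simp add: sum_distrib_left sum_distrib_right sum.swap[of _ "{..<N}"] mult_ac right_diff_distrib)
    have lhs2: "(\<Sum>m<L. b m * (\<Sum>i<N. complex_of_real (P i) * cis (of_int (nn m) * \<theta> i)))
        = of_nat N * (\<Sum>m<L. b m * Cc c s t (nn m))"
    proof -
      have "(\<Sum>i<N. complex_of_real (P i) * cis (of_int (nn m) * \<theta> i)) = of_nat N * Cc c s t (nn m)"
        if "m \<in> {..<L}" for m
      proof (rule avg)
        have "n m \<le> (\<Sum>m<L. n m)" using that by (intro member_le_sum) auto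
        then have "int (n m) \<le> int (\<Sum>m<L. n m)" by (simp only: of_nat_le_iff)
        then show "\<bar>nn m\<bar> + F0 < int N" unfolding nn_def N_def using F0nn by simp
      qed
      then show ?thesis by (simp add: sum_distrib_left mult_ac)
    qed
    have lhs3: "(\<Sum>m<L. b m * Cc c s t (nn m)) = (\<Sum>i<t. b (idx i) * (cnj (c i) / 2))"
    proof -
      have sub: "idx ` {..<t} \<subseteq> {..<L}" unfolding idx_def L_def using q0
        by (auto simp: less_max_iff_disj)
      have "(\<Sum>m<L. b m * Cc c s t (nn m)) = (\<Sum>m\<in>idx ` {..<t}. b m * Cc c s t (nn m))"
      proof (rule sum.mono_neutral_right)
        show "\<forall>m\<in>{..<L} - idx ` {..<t}. b m * Cc c s t (nn m) = 0"
        proof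
          fix m assume "m \<in> {..<L} - idx ` {..<t}"
          then have "\<forall>i<t. idx i \<noteq> m" by auto
          then show "b m * Cc c s t (nn m) = 0" using Cc_out[OF s0 F posn sep] by simp
        qed
      qed (use sub in auto)
      also have "\<dots> = (\<Sum>i<t. b (idx i) * Cc c s t (nn (idx i)))"
        by (rule sum.reindex_cong[where l=idx]) (use inj in \<open>auto intro: inj_on_subset\<close>)
      also have "\<dots> = (\<Sum>i<t. b (idx i) * (cnj (c i) / 2))"
        by (rule sum.cong) (use Cc_in[OF s0 F sn posn sep inj] in auto)
      finally show ?thesis .
    qed
    have lhs4: "Re (\<Sum>i<t. b (idx i) * (cnj (c i) / 2)) = X / 2"
    proof -
      have "Re (b (idx i) * (cnj (c i) / 2)) = w (idx i) / 2" for i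
      proof -
        have "b (idx i) * (cnj (c i) / 2) = complex_of_real (r ^ n (idx i)) * (a (idx i) * cnj (sgn (a (idx i)))) / 2"
          unfolding b_def c_def by (simp add: mult_ac)
        also have "\<dots> = complex_of_real (w (idx i) / 2)" unfolding mult_cnj_sgn w_def by (simp add: mult_ac)
        finally show ?thesis by (simp only: Re_complex_of_real)
      qed
      then have "Re (\<Sum>i<t. b (idx i) * (cnj (c i) / 2)) = (\<Sum>i<t. w (idx i) / 2)"
        by (simp only: Re_sum)
      then show ?thesis unfolding X_def by (simp add: sum_divide_distrib)
    qed
    have "(\<Sum>i<N. P i * Re (\<Sum>m<L. b m * cis (of_int (nn m) * \<theta> i)))
        = Re (of_nat N * (\<Sum>i<t. b (idx i) * (cnj (c i) / 2)))"
      unfolding lhs1 lhs2 lhs3 ..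
    also have "\<dots> = real N * (X / 2)"
      unfolding lhs4[symmetric] by simp
    finally have "real N * (X / 2) \<le> real N * (B + T)"
      using sumle rhs by linarith
    then have "X / 2 \<le> B + T" using N0 by simp
    then show ?thesis using Te by linarith
  qed
  have "X / 2 \<le> B" by (rule field_le_epsilon) (rule main)
  then show ?thesis unfolding X_def w_def idx_def by simp
qed


lemma abs_summ:
  fixes a :: "nat \<Rightarrow> complex" and n :: "nat \<Rightarrow> nat"
  assumes sm: "summable (\<lambda>k. a k * complex_of_real \<rho> ^ n k)" and r: "0 \<le> r" "r < \<rho>"
    and nk: "\<forall>k. k \<le> n k"
  shows "summable (\<lambda>k. norm (a k) * r ^ n k)"
proof -
  have "(\<lambda>k. a k * complex_of_real \<rho> ^ n k) \<longlonglongrightarrow> 0" by (rule summable_LIMSEQ_zero[OF sm])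
  then have "Bseq (\<lambda>k. a k * complex_of_real \<rho> ^ n k)" by (intro convergent_imp_Bseq) (auto simp: convergent_def)
  then obtain M where M: "M > 0" "\<forall>k. norm (a k * complex_of_real \<rho> ^ n k) \<le> M" by (elim BseqE)
  have rho: "\<rho> > 0" using r by simp
  define x where "x = r / \<rho>"
  have x: "0 \<le> x" "x < 1" unfolding x_def using r rho by auto
  show ?thesis
  proof (rule summable_comparison_test')
    show "summable (\<lambda>k. M * x ^ k)" using x by (intro summable_mult summable_geometric) simp
    fix k :: nat
    have "norm (norm (a k) * r ^ n k) = norm (a k) * \<rho> ^ n k * x ^ n k"
      unfolding x_def using r rho by (simp add: power_divide)
    also have "\<dots> \<le> M * x ^ n k"
      using M(2)[rule_format, of k] rho x by (intro mult_right_mono) (auto simp: norm_mult norm_power)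
    also have "\<dots> \<le> M * x ^ k"
      using x M nk by (intro mult_left_mono power_decreasing) auto
    finally show "norm (norm (a k) * r ^ n k) \<le> M * x ^ k" .
  qed
qed

theorem corollary3:
  fixes v :: "real \<Rightarrow> real" and a :: "nat \<Rightarrow> complex" and n :: "nat \<Rightarrow> nat"
    and lam :: real
  assumes "weight v" and "doubling v"
    and "\<forall>k. n k > 0"
    and "lam > 1" and "\<forall>k. real (n (Suc k)) \<ge> lam * real (n k)"
    and "\<forall>z\<in>ball 0 1. summable (\<lambda>k. a k * z ^ n k)"
  shows "(\<lambda>z. Re (\<Sum>k. a k * z ^ n k)) \<in> k_inf v \<longleftrightarrow>
         (\<lambda>z. Re (\<Sum>k. a k * z ^ n k)) \<in> h_inf v"
proof
  assume "(\<lambda>z. Re (\<Sum>k. a k * z ^ n k)) \<in> h_inf v"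
  then show "(\<lambda>z. Re (\<Sum>k. a k * z ^ n k)) \<in> k_inf v"
    unfolding h_inf_def k_inf_def by (auto dest: abs_le_D1)
next
  note pos = assms(3) and lam = assms(4) and gap = assms(5) and sm = assms(6)
  assume "(\<lambda>z. Re (\<Sum>k. a k * z ^ n k)) \<in> k_inf v"
  then obtain K where harm: "harmonic_on (ball 0 1) (\<lambda>z. Re (\<Sum>k. a k * z ^ n k))"
    and K: "K > 0" and Kb: "\<forall>z\<in>ball 0 1. Re (\<Sum>k. a k * z ^ n k) \<le> K * v (norm z)"
    unfolding k_inf_def by auto
  define Q where "Q = 2 + lam / (lam - 1)"
  obtain q where q: "Q < lam ^ q" using real_arch_pow[OF lam] by blast
  have "lam / (lam - 1) > 0" using lam by simp
  then have "Q > 1" unfolding Q_def by simp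
  then have q0: "q > 0" using q by (cases q) auto
  have qQ: "lam ^ q \<ge> Q" using q by simp
  have smono: "strict_mono n" unfolding strict_mono_Suc_iff
  proof
    fix k
    have "real (n k) < lam * real (n k)" using lam pos[rule_format, of k] by simp
    then show "n k < n (Suc k)" using gap[rule_format, of k] by linarith
  qed
  have nk: "\<forall>k. k \<le> n k" using seq_suble[OF smono] by blast
  have bound: "\<bar>Re (\<Sum>k. a k * z ^ n k)\<bar> \<le> (2 * real q * K) * v (norm z)" if z: "z \<in> ball 0 1" for z
  proof -
    define r where "r = norm z"
    have r: "0 \<le> r" "r < 1" using z unfolding r_def by auto
    define \<rho> where "\<rho> = (1 + r) / 2"
    have \<rho>: "r < \<rho>" "\<rho> < 1" "0 \<le> \<rho>" unfolding \<rho>_def using r by auto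
    have "complex_of_real \<rho> \<in> ball 0 1" using \<rho> by simp
    then have sm\<rho>: "summable (\<lambda>k. a k * complex_of_real \<rho> ^ n k)" using sm by blast
    have summ: "summable (\<lambda>m. norm (a m) * r ^ n m)" by (rule abs_summ[OF sm\<rho> r(1) \<rho>(1) nk])
    have ub: "\<forall>x. Re (\<Sum>m. a m * (complex_of_real r * cis x) ^ n m) \<le> K * v r"
    proof
      fix x
      have "norm (complex_of_real r * cis x) = r" using r by (simp add: norm_mult)
      then show "Re (\<Sum>m. a m * (complex_of_real r * cis x) ^ n m) \<le> K * v r"
        using Kb[rule_format, of "complex_of_real r * cis x"] r by simp
    qed
    have blk: "(\<Sum>i<t. norm (a (j + q * i)) * r ^ n (j + q * i)) \<le> 2 * (K * v r)" for j t
      by (rule block_bound[OF lam gap pos Q_def qQ q0 r(1) summ ub])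
    define w where "w = (\<lambda>m. norm (a m) * r ^ n m)"
    have wnn: "w m \<ge> 0" for m unfolding w_def using r by simp
    have part: "(\<Sum>m<M. w m) \<le> 2 * real q * K * v r" for M
    proof -
      have "(\<Sum>m<M. w m) \<le> (\<Sum>m<M * q. w m)"
        using q0 wnn by (intro sum_mono2) auto
      also have "\<dots> = (\<Sum>i<M. \<Sum>m\<in>{i * q..<i * q + q}. w m)"
        by (rule sum.nat_group[symmetric])
      also have "\<dots> = (\<Sum>i<M. \<Sum>j<q. w (j + q * i))"
      proof (rule sum.cong[OF refl])
        fix i
        have "(\<Sum>m\<in>{0 + i * q..<q + i * q}. w m) = (\<Sum>j\<in>{0..<q}. w (j + i * q))"
          by (rule sum.shift_bounds_nat_ivl)
        then show "(\<Sum>m\<in>{i * q..<i * q + q}. w m) = (\<Sum>j<q. w (j + q * i))"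
          by (simp add: atLeast0LessThan add.commute mult.commute)
      qed
      also have "\<dots> = (\<Sum>j<q. \<Sum>i<M. w (j + q * i))" by (rule sum.swap)
      also have "\<dots> \<le> (\<Sum>j<q. 2 * (K * v r))"
        by (rule sum_mono) (use blk in \<open>simp add: w_def\<close>)
      also have "\<dots> = 2 * real q * K * v r" by simp
      finally show ?thesis .
    qed
    have nw: "norm (a m * z ^ n m) = w m" for m unfolding w_def r_def by (simp add: norm_mult norm_power)
    have "\<bar>Re (\<Sum>k. a k * z ^ n k)\<bar> \<le> norm (\<Sum>k. a k * z ^ n k)" by (rule abs_Re_le_cmod)
    also have "\<dots> \<le> (\<Sum>m. w m)"
      by (rule norm_suminf_le) (use nw summ in \<open>auto simp: w_def\<close>)
    also have "\<dots> \<le> 2 * real q * K * v r"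
      by (rule suminf_le_const) (use summ part in \<open>auto simp: w_def\<close>)
    finally show ?thesis unfolding r_def by simp
  qed
  have "2 * real q * K > 0" using q0 K by simp
  then show "(\<lambda>z. Re (\<Sum>k. a k * z ^ n k)) \<in> h_inf v"
    unfolding h_inf_def using harm bound by blast
qed

end
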